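(* Let $F$ be a field and $T_3$ the ring of lower triangular $3\times3$ matrices over $F$. Two pairs $(x,y),(w,z)\in T_3^2$ each generating a free cyclic submodule lie in the same $GL_2(T_3)$-orbit (under right multiplication) if and only if the right ideals $xT_3+yT_3$ and $wT_3+zT_3$ coincide.
   Context: Rings are associative with identity. $T_3^2$ is the free left $T_3$-module of pairs; for $(a,b)$, $T_3(a,b)=\{(\alpha a,\alpha b):\alpha\in T_3\}$ is free if $r(a,b)=(0,0)$ implies $r=0$. $GL_2(T_3)$ acts on pairs by right multiplication of the row vector $(a,b)$ by an invertible $2\times2$ matrix over $T_3$. *)

theory Defs
  imports "HOL-Analysis.Analysis"
begin

text \<open>The ring T_3 of lower triangular 3x3 matrices over a field, realised as the
set of matrices in 'a^3^3 whose entries strictly above the diagonal vanish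
(index type 3 carries its natural linear order 0 < 1 < 2).\<close>

definition T3 :: "('a::field ^3^3) set" where
  "T3 = {M. \<forall>i j. i < j \<longrightarrow> M $ i $ j = 0}"

text \<open>T_3(a,b) is a free cyclic submodule of the left module T_3^2.\<close>
definition free_pair :: "'a::field ^3^3 \<Rightarrow> 'a ^3^3 \<Rightarrow> bool" where
  "free_pair a b \<longleftrightarrow> (\<forall>r\<in>T3. r ** a = 0 \<and> r ** b = 0 \<longrightarrow> r = 0)"

text \<open>A 2x2 matrix over T_3, written as (p,q,r,s) for [[p,q],[r,s]].\<close>
type_synonym 'a mat2T = "('a^3^3) \<times> ('a^3^3) \<times> ('a^3^3) \<times> ('a^3^3)"

fun mat2_mult :: "'a::field mat2T \<Rightarrow> 'a mat2T \<Rightarrow> 'a mat2T" where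
  "mat2_mult (p,q,r,s) (p',q',r',s') =
     (p ** p' + q ** r', p ** q' + q ** s', r ** p' + s ** r', r ** q' + s ** s')"

definition mat2_one :: "'a::field mat2T" where
  "mat2_one = (mat 1, 0, 0, mat 1)"

fun in_T3_mat2 :: "'a::field mat2T \<Rightarrow> bool" where
  "in_T3_mat2 (p,q,r,s) = (p \<in> T3 \<and> q \<in> T3 \<and> r \<in> T3 \<and> s \<in> T3)"

definition GL2T3 :: "'a::field mat2T set" where
  "GL2T3 = {A. in_T3_mat2 A \<and> (\<exists>B. in_T3_mat2 B \<and> mat2_mult A B = mat2_one \<and> mat2_mult B A = mat2_one)}"

fun act :: "('a::field ^3^3) \<times> ('a^3^3) \<Rightarrow> 'a mat2T \<Rightarrow> ('a^3^3) \<times> ('a^3^3)" where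
  "act (a,b) (p,q,r,s) = (a ** p + b ** r, a ** q + b ** s)"

definition right_ideal2 :: "'a::field ^3^3 \<Rightarrow> 'a^3^3 \<Rightarrow> ('a^3^3) set" where
  "right_ideal2 x y = {x ** s + y ** t | s t. s \<in> T3 \<and> t \<in> T3}"

end

theory Submission
  imports Defs
begin

lemma E3: "(k::3) = 0 \<or> k = 1 \<or> k = 2"
proof - have "(3::3) = 0" by simp thus ?thesis using exhaust_3[of k] by metis qed
lemma U3: "(UNIV::3 set) = {0,1,2}" using E3 by auto
lemma S3: "sum f (UNIV::3 set) = f 0 + f 1 + f 2" unfolding U3 by (simp add: add.assoc)
lemma o01: "(0::3) < 1" by (simp add: less_bit1_def bit1.Rep_0 bit1.Rep_1)
lemma o12: "(1::3) < 2" by (simp add: less_bit1_def bit1.Rep_1 bit1.Rep_numeral)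
lemma o02: "(0::3) < 2" by (simp add: less_bit1_def bit1.Rep_0 bit1.Rep_numeral)

lemma T3_mult: assumes "a \<in> T3" "b \<in> T3" shows "a ** b \<in> T3"
proof -
  have "\<And>i j. i < j \<Longrightarrow> (\<Sum>k\<in>UNIV. a$i$k * b$k$j) = 0"
  proof -
    fix i j :: 3 assume ij: "i < j"
    show "(\<Sum>k\<in>UNIV. a$i$k * b$k$j) = 0"
    proof (rule sum.neutral, rule ballI)
      fix k :: 3
      show "a$i$k * b$k$j = 0"
      proof (cases "k \<le> i")
        case True then have "k < j" using ij by simp
        then show ?thesis using assms(2) by (simp add: T3_def)
      next
        case False then have "i < k" by simp
        then show ?thesis using assms(1) by (simp add: T3_def)
      qed
    qed
  qed
  then show ?thesis by (simp add: T3_def matrix_matrix_mult_def)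
qed

lemma T3_add: "a \<in> T3 \<Longrightarrow> b \<in> T3 \<Longrightarrow> a + b \<in> T3" by (simp add: T3_def)
lemma T3_diff: "a \<in> T3 \<Longrightarrow> b \<in> T3 \<Longrightarrow> a - b \<in> T3" by (simp add: T3_def)
lemma T3_uminus: "a \<in> T3 \<Longrightarrow> - a \<in> T3" by (simp add: T3_def)
lemma T3_zero: "0 \<in> T3" by (simp add: T3_def)
lemma T3_one: "mat 1 \<in> T3" by (simp add: T3_def mat_def)

lemma matrix_add_rdistrib': "(A + B) ** (C::'a::semiring_1^'n^'m) = A ** C + B ** C"
  by (simp add: vec_eq_iff matrix_matrix_mult_def sum.distrib distrib_right)
lemma matrix_diff_rdistrib': "(A - B) ** (C::'a::ring_1^'n^'m) = A ** C - B ** C"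
  by (simp add: vec_eq_iff matrix_matrix_mult_def sum_subtractf left_diff_distrib)
lemma matrix_diff_ldistrib': "(C::'a::ring_1^'n^'m) ** (A - B) = C ** A - C ** B"
  by (simp add: vec_eq_iff matrix_matrix_mult_def sum_subtractf right_diff_distrib)
lemma matrix_uminus_l: "(- A) ** (C::'a::ring_1^'n^'m) = - (A ** C)"
  by (simp add: vec_eq_iff matrix_matrix_mult_def sum_negf)
lemma matrix_uminus_r: "(C::'a::ring_1^'n^'m) ** (- A) = - (C ** A)"
  by (simp add: vec_eq_iff matrix_matrix_mult_def sum_negf)

lemma act_mult: "act (act v A) B = act v (mat2_mult A B)"
  by (cases v; cases A; cases B)
     (simp add: matrix_add_rdistrib' matrix_add_ldistrib matrix_mul_assoc algebra_simps)

lemma act_one: "act v mat2_one = v"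
  by (cases v) (simp add: mat2_one_def)

lemma ideal_sub:
  assumes "act (x, y) A = (w, z)" "in_T3_mat2 A"
  shows "right_ideal2 w z \<subseteq> right_ideal2 x y"
proof
  obtain p q r s where A: "A = (p,q,r,s)" by (cases A) auto
  have T: "p \<in> T3" "q \<in> T3" "r \<in> T3" "s \<in> T3" using assms(2) A by auto
  have wz: "w = x ** p + y ** r" "z = x ** q + y ** s" using assms(1) A by auto
  fix m assume "m \<in> right_ideal2 w z"
  then obtain s1 t1 where st: "m = w ** s1 + z ** t1" "s1 \<in> T3" "t1 \<in> T3"
    by (auto simp: right_ideal2_def)
  have "m = x ** (p ** s1 + q ** t1) + y ** (r ** s1 + s ** t1)"
    unfolding st wz by (simp add: matrix_add_rdistrib' matrix_add_ldistrib matrix_mul_assoc algebra_simps)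
  moreover have "p ** s1 + q ** t1 \<in> T3" "r ** s1 + s ** t1 \<in> T3"
    using T st by (simp_all add: T3_add T3_mult)
  ultimately show "m \<in> right_ideal2 x y" unfolding right_ideal2_def by blast
qed

lemma forward:
  assumes "A \<in> GL2T3" "act (x, y) A = (w, z)"
  shows "right_ideal2 x y = right_ideal2 w z"
proof -
  obtain B where B: "in_T3_mat2 B" "mat2_mult A B = mat2_one" and AT: "in_T3_mat2 A"
    using assms(1) unfolding GL2T3_def by auto
  have "act (w, z) B = (x, y)" using assms(2) act_mult[of "(x,y)" A B] B act_one by simp
  then show ?thesis using ideal_sub[OF assms(2) AT] ideal_sub[OF _ B(1)] by blast
qed

typedef (overloaded) 'a m2 = "UNIV :: ('a::field mat2T) set" by simp
setup_lifting type_definition_m2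

instantiation m2 :: (field) ring_1
begin
lift_definition zero_m2 :: "'a m2" is "(0,0,0,0)" .
lift_definition one_m2 :: "'a m2" is "mat2_one" .
lift_definition plus_m2 :: "'a m2 \<Rightarrow> 'a m2 \<Rightarrow> 'a m2" is
  "\<lambda>(p,q,r,s) (p',q',r',s'). (p+p',q+q',r+r',s+s')" .
lift_definition minus_m2 :: "'a m2 \<Rightarrow> 'a m2 \<Rightarrow> 'a m2" is
  "\<lambda>(p,q,r,s) (p',q',r',s'). (p-p',q-q',r-r',s-s')" .
lift_definition uminus_m2 :: "'a m2 \<Rightarrow> 'a m2" is
  "\<lambda>(p,q,r,s). (-p,-q,-r,-s)" .
lift_definition times_m2 :: "'a m2 \<Rightarrow> 'a m2 \<Rightarrow> 'a m2" is "mat2_mult" .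
instance
proof
  fix a b c :: "'a m2"
  show "a * b * c = a * (b * c)"
    by transfer (clarsimp simp: matrix_add_rdistrib' matrix_add_ldistrib matrix_mul_assoc algebra_simps)
  show "1 * a = a" by transfer (clarsimp simp: mat2_one_def)
  show "a * 1 = a" by transfer (clarsimp simp: mat2_one_def)
  show "a + b + c = a + (b + c)" by transfer (clarsimp simp: algebra_simps)
  show "a + b = b + a" by transfer (clarsimp simp: algebra_simps)
  show "0 + a = a" by transfer clarsimp
  show "- a + a = 0" by transfer clarsimp
  show "a - b = a + - b" by transfer clarsimp
  show "(a + b) * c = a * c + b * c"
    by transfer (clarsimp simp: matrix_add_rdistrib' matrix_add_ldistrib algebra_simps)
  show "a * (b + c) = a * b + a * c"
    by transfer (clarsimp simp: matrix_add_rdistrib' matrix_add_ldistrib algebra_simps)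
  show "(0::'a m2) \<noteq> 1"
  proof transfer
    have "(mat 1 :: 'a^3^3) $ 0 $ 0 = 1" by (simp add: mat_def)
    then have "(mat 1 :: 'a^3^3) \<noteq> 0" by auto
    then show "((0::'a^3^3), (0::'a^3^3), (0::'a^3^3), (0::'a^3^3)) \<noteq> mat2_one"
      by (simp add: mat2_one_def)
  qed
qed
end

lemmas m2_abs = times_m2.abs_eq one_m2.abs_eq plus_m2.abs_eq minus_m2.abs_eq zero_m2.abs_eq
lemma Abs_m2_eq: "(Abs_m2 x = Abs_m2 y) = (x = y)" by (simp add: Abs_m2_inject)

lift_definition inT :: "'a::field m2 \<Rightarrow> bool" is in_T3_mat2 .
lemma inT_Abs: "inT (Abs_m2 (p,q,r,s)) \<longleftrightarrow> p \<in> T3 \<and> q \<in> T3 \<and> r \<in> T3 \<and> s \<in> T3"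
  by (simp add: inT.abs_eq)
lemma inT_mult: "inT a \<Longrightarrow> inT b \<Longrightarrow> inT (a * b)"
  by transfer (clarsimp simp: T3_add T3_mult)
lemma inT_add: "inT a \<Longrightarrow> inT b \<Longrightarrow> inT (a + b)"
  by transfer (clarsimp simp: T3_add)
lemma inT_diff: "inT a \<Longrightarrow> inT b \<Longrightarrow> inT (a - b)"
  by transfer (clarsimp simp: T3_diff)
lemma inT_one: "inT 1"
  by transfer (simp add: mat2_one_def T3_one T3_zero)

definition dg :: "('n::finite \<Rightarrow> 'a::field) \<Rightarrow> 'a^'n^'n" where
  "dg f = (\<chi> i j. if i = j then f i else 0)"

lemma dg_mult_l: "dg f ** M = (\<chi> i j. f i * M$i$j)"
  unfolding dg_def matrix_matrix_mult_def
  by (auto simp: vec_eq_iff if_distrib if_distribR sum.delta cong: if_cong)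
lemma dg_mult: "dg f ** dg g = dg (\<lambda>i. f i * g i)"
  unfolding dg_mult_l by (simp add: dg_def vec_eq_iff)
lemma dg_add: "dg f + dg g = dg (\<lambda>i. f i + g i)"
  by (simp add: dg_def vec_eq_iff)
lemma dg_one: "dg (\<lambda>i. 1) = mat 1"
  by (simp add: dg_def mat_def vec_eq_iff)
lemma dg_T3: "dg f \<in> T3" by (simp add: dg_def T3_def)

definition SL :: "'a::field^3^3 \<Rightarrow> bool" where "SL a = (\<forall>i j. i \<le> j \<longrightarrow> a$i$j = 0)"
definition SL2 :: "'a::field^3^3 \<Rightarrow> bool" where "SL2 a = (\<forall>i j. (i,j) \<noteq> (2,0) \<longrightarrow> a$i$j = 0)"

lemma all3: "(\<forall>i::3. P i) \<longleftrightarrow> P 0 \<and> P 1 \<and> P 2" using E3 by metis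
lemma ne3: "(0::3) \<noteq> 1" "(0::3) \<noteq> 2" "(1::3) \<noteq> 2" "(1::3) \<noteq> 0" "(2::3) \<noteq> 0" "(2::3) \<noteq> 1"
  using o01 o12 o02 by auto
lemma le3: "(0::3) \<le> 1" "(0::3) \<le> 2" "(1::3) \<le> 2" "\<not> (1::3) \<le> 0" "\<not> (2::3) \<le> 0" "\<not> (2::3) \<le> 1"
  using o01 o12 o02 by auto

lemma SL_iff: "SL a \<longleftrightarrow> a$0$0=0 \<and> a$0$1=0 \<and> a$0$2=0 \<and> a$1$1=0 \<and> a$1$2=0 \<and> a$2$2=0"
  unfolding SL_def all3 using le3 by auto
lemma SL2_iff: "SL2 a \<longleftrightarrow> a$0$0=0 \<and> a$0$1=0 \<and> a$0$2=0 \<and> a$1$0=0 \<and> a$1$1=0 \<and> a$1$2=0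
   \<and> a$2$1=0 \<and> a$2$2=0"
  unfolding SL2_def all3 using ne3 by auto

lemma SL_mult: "SL a \<Longrightarrow> SL b \<Longrightarrow> SL2 (a ** b)"
  by (simp add: SL_iff SL2_iff matrix_matrix_mult_def S3)
lemma SL2_mult: "SL2 a \<Longrightarrow> SL b \<Longrightarrow> a ** b = 0"
  by (simp add: SL_iff SL2_iff matrix_matrix_mult_def S3 vec_eq_iff all3)
lemma SL_add: "SL a \<Longrightarrow> SL b \<Longrightarrow> SL (a + b)" by (simp add: SL_def)
lemma SL2_add: "SL2 a \<Longrightarrow> SL2 b \<Longrightarrow> SL2 (a + b)" by (simp add: SL2_def)

lift_definition SLm :: "'a::field m2 \<Rightarrow> bool" is "\<lambda>(p,q,r,s). SL p \<and> SL q \<and> SL r \<and> SL s" .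
lift_definition SL2m :: "'a::field m2 \<Rightarrow> bool" is "\<lambda>(p,q,r,s). SL2 p \<and> SL2 q \<and> SL2 r \<and> SL2 s" .

lemma SLm_mult: "SLm a \<Longrightarrow> SLm b \<Longrightarrow> SL2m (a * b)"
  by transfer (clarsimp simp: SL2_add SL_mult)
lemma SL2m_mult: "SL2m a \<Longrightarrow> SLm b \<Longrightarrow> a * b = 0"
  by transfer (clarsimp simp: SL2_mult)

lemma nil3: "SLm N \<Longrightarrow> N * N * N = 0"
  using SLm_mult SL2m_mult by blast

lemma SL_comb:
  assumes "p \<in> T3" "r \<in> T3" "\<And>i. f i * p$i$i + g i * r$i$i = c"
  shows "SL (dg f ** p + dg g ** r - mat c)"
  unfolding SL_def
proof (intro allI impI)
  fix i j :: 3 assume "i \<le> j"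
  then consider "i = j" | "i < j" by fastforce
  then show "(dg f ** p + dg g ** r - mat c) $ i $ j = 0"
  proof cases
    case 1 then show ?thesis using assms(3)[of i] by (simp add: dg_mult_l mat_def)
  next
    case 2 then show ?thesis using assms(1,2) by (simp add: dg_mult_l mat_def T3_def)
  qed
qed

lemma inv_GL:
  assumes T: "p \<in> T3" "q \<in> T3" "r \<in> T3" "s \<in> T3"
    and dnz: "\<And>j. p$j$j * s$j$j - q$j$j * r$j$j \<noteq> 0"
  shows "(p,q,r,s) \<in> GL2T3"
proof -
  define d where "d j = p$j$j * s$j$j - q$j$j * r$j$j" for j
  have dn: "d j \<noteq> 0" for j using dnz d_def by simp
  have dd1: "p$i$i * s$i$i / d i - q$i$i * r$i$i / d i = 1" for i
  proof -
    have "p$i$i * s$i$i / d i - q$i$i * r$i$i / d i = d i / d i"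
      by (simp only: d_def diff_divide_distrib[symmetric])
    then show ?thesis using dn[of i] by simp
  qed
  have dd2: "s$i$i * p$i$i / d i - r$i$i * q$i$i / d i = 1" for i
  proof -
    have "s$i$i * p$i$i / d i - r$i$i * q$i$i / d i = d i / d i"
      by (simp only: d_def diff_divide_distrib[symmetric] mult.commute)
    then show ?thesis using dn[of i] by simp
  qed
  have dd3: "s$i$i * p$i$i / d i - q$i$i * r$i$i / d i = 1" for i
    using dd1[of i] by (simp add: mult.commute)
  have dd4: "p$i$i * s$i$i / d i - r$i$i * q$i$i / d i = 1" for i
    using dd1[of i] by (simp add: mult.commute)
  define a where "a = Abs_m2 (p,q,r,s)"
  define D where "D = Abs_m2 (dg (\<lambda>i. p$i$i), dg (\<lambda>i. q$i$i), dg (\<lambda>i. r$i$i), dg (\<lambda>i. s$i$i))"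
  define Di where "Di = Abs_m2 (dg (\<lambda>i. s$i$i/d i), dg (\<lambda>i. -q$i$i/d i), dg (\<lambda>i. -r$i$i/d i), dg (\<lambda>i. p$i$i/d i))"
  have DDi: "D * Di = 1"
    unfolding D_def Di_def m2_abs Abs_m2_eq
    using dn apply (simp add: dg_mult dg_add mat2_one_def dg_one[symmetric])
    by (simp add: dg_def vec_eq_iff dd1 dd2 dd3 dd4)
  have DiD: "Di * D = 1"
    unfolding D_def Di_def m2_abs Abs_m2_eq
    using dn apply (simp add: dg_mult dg_add mat2_one_def dg_one[symmetric])
    by (simp add: dg_def vec_eq_iff dd1 dd2 dd3 dd4)
  define N where "N = Di * a - 1"
  have c1: "s$i$i / d i * p$i$i + - q$i$i / d i * r$i$i = 1" for i
    using dn[of i] apply (simp add: field_simps) by (simp add: d_def algebra_simps)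
  have c2: "s$i$i / d i * q$i$i + - q$i$i / d i * s$i$i = 0" for i
    using dn[of i] by (simp add: field_simps)
  have c3: "- r$i$i / d i * p$i$i + p$i$i / d i * r$i$i = 0" for i
    using dn[of i] by (simp add: field_simps)
  have c4: "- r$i$i / d i * q$i$i + p$i$i / d i * s$i$i = 1" for i
    using dn[of i] apply (simp add: field_simps) by (simp add: d_def algebra_simps)
  have SLN: "SLm N"
    unfolding N_def Di_def a_def m2_abs
    by (simp add: SLm.abs_eq mat2_one_def SL_comb[OF T(1) T(3) c1, simplified] SL_comb[OF T(2) T(4) c2, simplified]
        SL_comb[OF T(1) T(3) c3, simplified] SL_comb[OF T(2) T(4) c4, simplified])
  have inTa: "inT a" using T by (simp add: a_def inT_Abs)
  have inTDi: "inT Di" by (simp add: Di_def inT_Abs dg_T3)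
  define b where "b = (1 - N + N * N) * Di"
  have N3: "N * N * N = 0" using nil3[OF SLN] .
  have aeq: "Di * a = 1 + N" by (simp add: N_def)
  have ba: "b * a = 1"
  proof -
    have "b * a = (1 - N + N * N) * (Di * a)" by (simp add: b_def mult.assoc)
    also have "\<dots> = 1 + N * N * N" unfolding aeq by (simp add: algebra_simps)
    finally show ?thesis using N3 by simp
  qed
  have ab: "a * b = 1"
  proof -
    have "a = D * (Di * a)" using DDi by (simp add: mult.assoc[symmetric])
    then have "a * b = D * ((1 + N) * (1 - N + N * N)) * Di"
      by (simp add: aeq b_def mult.assoc)
    also have "(1 + N) * (1 - N + N * N) = 1 + N * N * N" by (simp add: algebra_simps)
    finally show ?thesis using N3 DDi by simp
  qed
  have inTb: "inT b" unfolding b_def N_def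
    using inTa inTDi by (simp add: inT_mult inT_diff inT_add inT_one)
  show ?thesis
    unfolding GL2T3_def
  proof (intro CollectI conjI exI)
    show "in_T3_mat2 (p,q,r,s)" using T by simp
    show "in_T3_mat2 (Rep_m2 b)" using inTb by (simp add: inT.rep_eq)
    show "mat2_mult (p, q, r, s) (Rep_m2 b) = mat2_one"
      using arg_cong[OF ab, of Rep_m2] by (simp add: a_def times_m2.rep_eq one_m2.rep_eq Abs_m2_inverse)
    show "mat2_mult (Rep_m2 b) (p, q, r, s) = mat2_one"
      using arg_cong[OF ba, of Rep_m2] by (simp add: a_def times_m2.rep_eq one_m2.rep_eq Abs_m2_inverse)
  qed
qed

lemma gl2_trans:
  fixes l1 l2 a c :: "'a::field"
  assumes "l1 \<noteq> 0 \<or> l2 \<noteq> 0" "a \<noteq> 0 \<or> c \<noteq> 0"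
  shows "\<exists>m11 m12 m21 m22. m11*m22 - m12*m21 \<noteq> 0 \<and> m11*l1 + m12*l2 = a \<and> m21*l1 + m22*l2 = c"
proof (cases "l1 \<noteq> 0")
  case True
  show ?thesis
  proof (cases "a \<noteq> 0")
    case True
    then show ?thesis using \<open>l1 \<noteq> 0\<close>
      by (intro exI[of _ "a/l1"] exI[of _ 0] exI[of _ "(c - l2)/l1"] exI[of _ 1]) (simp add: field_simps)
  next
    case False
    then have "c \<noteq> 0" using assms(2) by simp
    then show ?thesis using \<open>l1 \<noteq> 0\<close> False
      by (intro exI[of _ "-l2/l1"] exI[of _ 1] exI[of _ "c/l1"] exI[of _ 0]) (simp add: field_simps)
  qed
next
  case False
  then have l2: "l2 \<noteq> 0" "l1 = 0" using assms(1) by auto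
  show ?thesis
  proof (cases "c \<noteq> 0")
    case True
    then show ?thesis using l2
      by (intro exI[of _ 1] exI[of _ "a/l2"] exI[of _ 0] exI[of _ "c/l2"]) (simp add: field_simps)
  next
    case False
    then have "a \<noteq> 0" using assms(2) by simp
    then show ?thesis using l2 False
      by (intro exI[of _ 0] exI[of _ "a/l2"] exI[of _ 1] exI[of _ "c/l2"]) (simp add: field_simps)
  qed
qed

lemma key:
  fixes X Y W Z :: "'a::field ^'n"
  assumes U0: "0 \<in> U" and Uadd: "\<And>u v. u \<in> U \<Longrightarrow> v \<in> U \<Longrightarrow> u + v \<in> U"
    and Usc: "\<And>c u. u \<in> U \<Longrightarrow> c *s u \<in> U"
    and h1: "W - (\<alpha> *s X + \<beta> *s Y) \<in> U" and h2: "Z - (\<gamma> *s X + \<delta> *s Y) \<in> U"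
    and h3: "X - (\<alpha>' *s W + \<beta>' *s Z) \<in> U" and h4: "Y - (\<gamma>' *s W + \<delta>' *s Z) \<in> U"
  shows "\<exists>a b c d. a*d - b*c \<noteq> 0 \<and> W - (a *s X + b *s Y) \<in> U \<and> Z - (c *s X + d *s Y) \<in> U"
proof -
  have Ulin: "c *s u + d *s v \<in> U" if "u \<in> U" "v \<in> U" for u v c d
    by (rule Uadd[OF Usc[OF that(1)] Usc[OF that(2)]])
  have o1: "b = 1" if "1 - b = 0" for b :: 'a using that by simp
  have o2: "b = 0" if "- b = 0" for b :: 'a using that by simp
  have Ueq: "v \<in> U" if "u \<in> U" "u = v" for u v using that by simp
  show ?thesis
  proof (cases "\<forall>c1 c2. c1 *s X + c2 *s Y \<in> U \<longrightarrow> c1 = 0 \<and> c2 = 0")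
    case True
    have "(X - (\<alpha>' *s W + \<beta>' *s Z)) + (\<alpha>' *s (W - (\<alpha> *s X + \<beta> *s Y)) + \<beta>' *s (Z - (\<gamma> *s X + \<delta> *s Y))) \<in> U"
      by (rule Uadd[OF h3 Ulin[OF h1 h2]])
    moreover have "(X - (\<alpha>' *s W + \<beta>' *s Z)) + (\<alpha>' *s (W - (\<alpha> *s X + \<beta> *s Y)) + \<beta>' *s (Z - (\<gamma> *s X + \<delta> *s Y)))
       = (1 - (\<alpha>'*\<alpha>+\<beta>'*\<gamma>)) *s X + (-(\<alpha>'*\<beta>+\<beta>'*\<delta>)) *s Y"
      by (simp add: vec_eq_iff algebra_simps)
    ultimately have "(1 - (\<alpha>'*\<alpha>+\<beta>'*\<gamma>)) *s X + (-(\<alpha>'*\<beta>+\<beta>'*\<delta>)) *s Y \<in> U" by (rule Ueq)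
    then have "1 - (\<alpha>'*\<alpha>+\<beta>'*\<gamma>) = 0 \<and> -(\<alpha>'*\<beta>+\<beta>'*\<delta>) = 0" by (rule True[rule_format])
    then have e1: "\<alpha>'*\<alpha>+\<beta>'*\<gamma> = 1" "\<alpha>'*\<beta>+\<beta>'*\<delta> = 0" using o1 o2 by blast+
    have "(Y - (\<gamma>' *s W + \<delta>' *s Z)) + (\<gamma>' *s (W - (\<alpha> *s X + \<beta> *s Y)) + \<delta>' *s (Z - (\<gamma> *s X + \<delta> *s Y))) \<in> U"
      by (rule Uadd[OF h4 Ulin[OF h1 h2]])
    moreover have "(Y - (\<gamma>' *s W + \<delta>' *s Z)) + (\<gamma>' *s (W - (\<alpha> *s X + \<beta> *s Y)) + \<delta>' *s (Z - (\<gamma> *s X + \<delta> *s Y)))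
       = (-(\<gamma>'*\<alpha>+\<delta>'*\<gamma>)) *s X + (1 - (\<gamma>'*\<beta>+\<delta>'*\<delta>)) *s Y"
      by (simp add: vec_eq_iff algebra_simps)
    ultimately have "(-(\<gamma>'*\<alpha>+\<delta>'*\<gamma>)) *s X + (1 - (\<gamma>'*\<beta>+\<delta>'*\<delta>)) *s Y \<in> U" by (rule Ueq)
    then have "-(\<gamma>'*\<alpha>+\<delta>'*\<gamma>) = 0 \<and> 1 - (\<gamma>'*\<beta>+\<delta>'*\<delta>) = 0" by (rule True[rule_format])
    then have e2: "\<gamma>'*\<alpha>+\<delta>'*\<gamma> = 0" "\<gamma>'*\<beta>+\<delta>'*\<delta> = 1" using o1 o2 by blast+
    have "(\<alpha>'*\<delta>' - \<beta>'*\<gamma>')*(\<alpha>*\<delta>-\<beta>*\<gamma>) = (\<alpha>'*\<alpha>+\<beta>'*\<gamma>)*(\<gamma>'*\<beta>+\<delta>'*\<delta>) - (\<alpha>'*\<beta>+\<beta>'*\<delta>)*(\<gamma>'*\<alpha>+\<delta>'*\<gamma>)"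
      by (simp add: algebra_simps)
    then have "(\<alpha>'*\<delta>' - \<beta>'*\<gamma>')*(\<alpha>*\<delta>-\<beta>*\<gamma>) = 1" using e1 e2 by simp
    then have "\<alpha>*\<delta>-\<beta>*\<gamma> \<noteq> 0" by auto
    then show ?thesis using h1 h2 by blast
  next
    case False
    then obtain c1 c2 where cc: "c1 *s X + c2 *s Y \<in> U" "c1 \<noteq> 0 \<or> c2 \<noteq> 0" by blast
    show ?thesis
    proof (cases "X \<in> U \<and> Y \<in> U")
      case True
      have "(W - (\<alpha> *s X + \<beta> *s Y)) + (\<alpha> *s X + \<beta> *s Y) + (-1) *s X \<in> U"
        using True by (intro Uadd h1 Ulin Usc) auto
      moreover have "(W - (\<alpha> *s X + \<beta> *s Y)) + (\<alpha> *s X + \<beta> *s Y) + (-1) *s X = W - (1 *s X + 0 *s Y)"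
        by (simp add: vec_eq_iff algebra_simps)
      moreover have "(Z - (\<gamma> *s X + \<delta> *s Y)) + (\<gamma> *s X + \<delta> *s Y) + (-1) *s Y \<in> U"
        using True by (intro Uadd h2 Ulin Usc) auto
      moreover have "(Z - (\<gamma> *s X + \<delta> *s Y)) + (\<gamma> *s X + \<delta> *s Y) + (-1) *s Y = Z - (0 *s X + 1 *s Y)"
        by (simp add: vec_eq_iff algebra_simps)
      ultimately have "W - (1 *s X + 0 *s Y) \<in> U" "Z - (0 *s X + 1 *s Y) \<in> U" by (metis Ueq)+
      then show ?thesis by (intro exI[of _ 1] exI[of _ 0] exI[of _ 0] exI[of _ 1]) simp
    next
      case notU: False
      obtain G l1 l2 where G: "X - l1 *s G \<in> U" "Y - l2 *s G \<in> U"
      proof (cases "c2 \<noteq> 0")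
        case True
        have "(1/c2) *s (c1 *s X + c2 *s Y) \<in> U" by (rule Usc[OF cc(1)])
        moreover have "(1/c2) *s (c1 *s X + c2 *s Y) = Y - (-c1/c2) *s X"
          using True by (simp add: vec_eq_iff field_simps)
        ultimately have "Y - (-c1/c2) *s X \<in> U" by (rule Ueq)
        moreover have "X - 1 *s X \<in> U" using U0 by (simp add: vec_eq_iff)
        ultimately show ?thesis using that by blast
      next
        case False
        then have "c1 \<noteq> 0" using cc by simp
        have "(1/c1) *s (c1 *s X + c2 *s Y) \<in> U" by (rule Usc[OF cc(1)])
        moreover have "(1/c1) *s (c1 *s X + c2 *s Y) = X - 0 *s Y"
          using False \<open>c1 \<noteq> 0\<close> by (simp add: vec_eq_iff field_simps)
        ultimately have "X - 0 *s Y \<in> U" by (rule Ueq)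
        moreover have "Y - 1 *s Y \<in> U" using U0 by (simp add: vec_eq_iff)
        ultimately show ?thesis using that by blast
      qed
      define a0 where "a0 = \<alpha>*l1 + \<beta>*l2"
      define c0 where "c0 = \<gamma>*l1 + \<delta>*l2"
      have "(W - (\<alpha> *s X + \<beta> *s Y)) + (\<alpha> *s (X - l1 *s G) + \<beta> *s (Y - l2 *s G)) \<in> U"
        by (rule Uadd[OF h1 Ulin[OF G]])
      moreover have "(W - (\<alpha> *s X + \<beta> *s Y)) + (\<alpha> *s (X - l1 *s G) + \<beta> *s (Y - l2 *s G)) = W - a0 *s G"
        by (simp add: vec_eq_iff algebra_simps a0_def)
      ultimately have WG: "W - a0 *s G \<in> U" by (rule Ueq)
      have "(Z - (\<gamma> *s X + \<delta> *s Y)) + (\<gamma> *s (X - l1 *s G) + \<delta> *s (Y - l2 *s G)) \<in> U"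
        by (rule Uadd[OF h2 Ulin[OF G]])
      moreover have "(Z - (\<gamma> *s X + \<delta> *s Y)) + (\<gamma> *s (X - l1 *s G) + \<delta> *s (Y - l2 *s G)) = Z - c0 *s G"
        by (simp add: vec_eq_iff algebra_simps c0_def)
      ultimately have ZG: "Z - c0 *s G \<in> U" by (rule Ueq)
      have l12: "l1 \<noteq> 0 \<or> l2 \<noteq> 0"
      proof (rule ccontr)
        assume "\<not> (l1 \<noteq> 0 \<or> l2 \<noteq> 0)"
        then show False using G notU by simp
      qed
      have ac: "a0 \<noteq> 0 \<or> c0 \<noteq> 0"
      proof (rule ccontr)
        assume "\<not> (a0 \<noteq> 0 \<or> c0 \<noteq> 0)"
        then have "W \<in> U" "Z \<in> U" using WG ZG by simp_all
        have "(X - (\<alpha>' *s W + \<beta>' *s Z)) + (\<alpha>' *s W + \<beta>' *s Z) \<in> U"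
          by (rule Uadd[OF h3 Ulin[OF \<open>W \<in> U\<close> \<open>Z \<in> U\<close>]])
        moreover have "(Y - (\<gamma>' *s W + \<delta>' *s Z)) + (\<gamma>' *s W + \<delta>' *s Z) \<in> U"
          by (rule Uadd[OF h4 Ulin[OF \<open>W \<in> U\<close> \<open>Z \<in> U\<close>]])
        ultimately have "X \<in> U" "Y \<in> U" by simp_all
        then show False using notU by blast
      qed
      obtain m11 m12 m21 m22 where m: "m11*m22 - m12*m21 \<noteq> 0" "m11*l1 + m12*l2 = a0" "m21*l1 + m22*l2 = c0"
        using gl2_trans[OF l12 ac] by blast
      have "(W - a0 *s G) + ((-m11) *s (X - l1 *s G) + (-m12) *s (Y - l2 *s G)) \<in> U"
        by (rule Uadd[OF WG Ulin[OF G]])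
      moreover have "(W - a0 *s G) + ((-m11) *s (X - l1 *s G) + (-m12) *s (Y - l2 *s G)) = W - (m11 *s X + m12 *s Y)"
        unfolding m(2)[symmetric] by (simp add: vec_eq_iff algebra_simps)
      moreover have "(Z - c0 *s G) + ((-m21) *s (X - l1 *s G) + (-m22) *s (Y - l2 *s G)) \<in> U"
        by (rule Uadd[OF ZG Ulin[OF G]])
      moreover have "(Z - c0 *s G) + ((-m21) *s (X - l1 *s G) + (-m22) *s (Y - l2 *s G)) = Z - (m21 *s X + m22 *s Y)"
        unfolding m(3)[symmetric] by (simp add: vec_eq_iff algebra_simps)
      ultimately have "W - (m11 *s X + m12 *s Y) \<in> U" "Z - (m21 *s X + m22 *s Y) \<in> U" by (metis Ueq)+
      then show ?thesis using m(1) by blast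
    qed
  qed
qed

definition Usp :: "'a::field^3^3 \<Rightarrow> 'a^3^3 \<Rightarrow> 3 \<Rightarrow> ('a^3) set" where
  "Usp x y j = {x *v a + y *v b | a b. (\<forall>k. k \<le> j \<longrightarrow> a$k = 0) \<and> (\<forall>k. k \<le> j \<longrightarrow> b$k = 0)}"

lemma Usp_0: "0 \<in> Usp x y j"
  unfolding Usp_def by (rule CollectI, rule exI[of _ 0], rule exI[of _ 0]) simp

lemma Usp_add: "u \<in> Usp x y j \<Longrightarrow> v \<in> Usp x y j \<Longrightarrow> u + v \<in> Usp x y j"
proof -
  assume "u \<in> Usp x y j" "v \<in> Usp x y j"
  then obtain a b a' b' where "u = x *v a + y *v b" "\<forall>k. k \<le> j \<longrightarrow> a$k = 0" "\<forall>k. k \<le> j \<longrightarrow> b$k = 0"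
     "v = x *v a' + y *v b'" "\<forall>k. k \<le> j \<longrightarrow> a'$k = 0" "\<forall>k. k \<le> j \<longrightarrow> b'$k = 0"
    unfolding Usp_def by blast
  then show ?thesis unfolding Usp_def
    by (intro CollectI exI[of _ "a + a'"] exI[of _ "b + b'"]) (simp add: algebra_simps)
qed

lemma Usp_sc: "u \<in> Usp x y j \<Longrightarrow> c *s u \<in> Usp x y j"
proof -
  assume "u \<in> Usp x y j"
  then obtain a b where "u = x *v a + y *v b" "\<forall>k. k \<le> j \<longrightarrow> a$k = 0" "\<forall>k. k \<le> j \<longrightarrow> b$k = 0"
    unfolding Usp_def by blast
  then show ?thesis unfolding Usp_def
    by (intro CollectI exI[of _ "c *s a"] exI[of _ "c *s b"]) (simp add: vector_scalar_commute vector_add_ldistrib)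
qed

lemma col_eq: "M *v axis j 1 = (\<chi> i. M$i$j)"
  by (auto simp: matrix_vector_mult_def axis_def vec_eq_iff if_distrib if_distribR sum.delta' cong: if_cong)

lemma mem_col:
  assumes "M \<in> right_ideal2 x y"
  shows "\<exists>P R. (\<forall>k. k < j \<longrightarrow> P$k = 0 \<and> R$k = 0) \<and> M *v axis j 1 = x *v P + y *v R"
proof -
  obtain s t where st: "M = x ** s + y ** t" "s \<in> T3" "t \<in> T3"
    using assms unfolding right_ideal2_def by blast
  have "M *v axis j 1 = x *v (s *v axis j 1) + y *v (t *v axis j 1)"
    unfolding st by (simp add: matrix_vector_mul_assoc matrix_vector_mult_add_rdistrib)
  moreover have "\<forall>k. k < j \<longrightarrow> (s *v axis j 1)$k = 0 \<and> (t *v axis j 1)$k = 0"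
    using st(2,3) by (simp add: col_eq T3_def)
  ultimately show ?thesis by blast
qed

lemma self_mem: "w \<in> right_ideal2 w z" "z \<in> right_ideal2 w z"
  unfolding right_ideal2_def
   apply (rule CollectI, rule exI[of _ "mat 1"], rule exI[of _ 0]) apply (simp add: T3_one T3_zero)
  apply (rule CollectI, rule exI[of _ 0], rule exI[of _ "mat 1"]) apply (simp add: T3_one T3_zero)
  done

lemma succ3: "(j::3) \<noteq> 2 \<Longrightarrow> \<exists>j'. \<forall>k. (k \<le> j) = (k < j')"
proof -
  assume "j \<noteq> 2"
  then have "j = 0 \<or> j = 1" using E3 by blast
  then show ?thesis
  proof
    assume "j = 0"
    have "(k \<le> (0::3)) = (k < 1)" for k using E3[of k] o01 o12 o02 by auto
    then show ?thesis using \<open>j = 0\<close> by blast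
  next
    assume "j = 1"
    have "(k \<le> (1::3)) = (k < 2)" for k using E3[of k] o01 o12 o02 by auto
    then show ?thesis using \<open>j = 1\<close> by blast
  qed
qed

lemma le2: "(k::3) \<le> 2" using E3[of k] o01 o12 o02 by auto

lemma Usp_sub:
  assumes eq: "right_ideal2 x y = right_ideal2 w z"
  shows "Usp x y j \<subseteq> Usp w z j"
proof
  fix u assume "u \<in> Usp x y j"
  then obtain a b where ab: "u = x *v a + y *v b" "\<forall>k. k \<le> j \<longrightarrow> a$k = 0" "\<forall>k. k \<le> j \<longrightarrow> b$k = 0"
    unfolding Usp_def by blast
  show "u \<in> Usp w z j"
  proof (cases "j = 2")
    case True
    then have "a = 0" "b = 0" using ab le2 by (auto simp: vec_eq_iff)
    then have "u = 0" using ab by simp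
    then show ?thesis using Usp_0 by simp
  next
    case False
    then obtain j' where j': "\<And>k. (k \<le> j) = (k < j')" using succ3 by blast
    define s where "s = (\<chi> i l. if l = j' then a$i else 0)"
    define t where "t = (\<chi> i l. if l = j' then b$i else 0)"
    have sT: "s \<in> T3" "t \<in> T3" using ab j' by (auto simp: s_def t_def T3_def)
    have "x ** s + y ** t \<in> right_ideal2 x y" unfolding right_ideal2_def using sT by blast
    then have "x ** s + y ** t \<in> right_ideal2 w z" using eq by simp
    from mem_col[OF this, of j'] obtain P R where PR: "\<forall>k. k < j' \<longrightarrow> P$k = 0 \<and> R$k = 0"
      "(x ** s + y ** t) *v axis j' 1 = w *v P + z *v R" by blast
    have "(x ** s + y ** t) *v axis j' 1 = x *v (s *v axis j' 1) + y *v (t *v axis j' 1)"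
      by (simp add: matrix_vector_mul_assoc matrix_vector_mult_add_rdistrib)
    also have "s *v axis j' 1 = a" by (simp add: col_eq s_def vec_eq_iff)
    also have "t *v axis j' 1 = b" by (simp add: col_eq t_def vec_eq_iff)
    finally have "u = w *v P + z *v R" using ab PR by simp
    then show ?thesis using PR j' unfolding Usp_def by blast
  qed
qed

lemma decomp:
  assumes "\<forall>k. k < j \<longrightarrow> P$k = 0 \<and> R$k = 0"
  shows "x *v P + y *v R - (P$j *s (x *v axis j 1) + R$j *s (y *v axis j 1)) \<in> Usp x y j"
proof -
  have "x *v P + y *v R - (P$j *s (x *v axis j 1) + R$j *s (y *v axis j 1))
     = x *v (P - P$j *s axis j 1) + y *v (R - R$j *s axis j 1)"
    by (simp add: matrix_vector_mult_diff_distrib vector_scalar_commute algebra_simps)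
  moreover have "\<forall>k. k \<le> j \<longrightarrow> (P - P$j *s axis j 1)$k = 0" "\<forall>k. k \<le> j \<longrightarrow> (R - R$j *s axis j 1)$k = 0"
    using assms by (auto simp: axis_def)
  ultimately show ?thesis unfolding Usp_def by blast
qed

lemma col_lemma:
  assumes eq: "right_ideal2 x y = right_ideal2 w z"
  shows "\<exists>P Q R S. (\<forall>k. k < j \<longrightarrow> P$k = 0 \<and> Q$k = 0 \<and> R$k = 0 \<and> S$k = 0) \<and>
     x *v P + y *v R = w *v axis j 1 \<and> x *v Q + y *v S = z *v axis j 1 \<and> P$j * S$j - Q$j * R$j \<noteq> 0"
proof -
  define X where "X = x *v axis j 1"
  define Y where "Y = y *v axis j 1"
  define W where "W = w *v axis j 1"
  define Z where "Z = z *v axis j 1"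
  have Ue: "Usp x y j = Usp w z j" using Usp_sub[OF eq] Usp_sub[OF eq[symmetric]] by blast
  have mw: "w \<in> right_ideal2 x y" "z \<in> right_ideal2 x y" by (metis self_mem eq)+
  have mx: "x \<in> right_ideal2 w z" "y \<in> right_ideal2 w z" by (metis self_mem eq)+
  obtain P0 R0 where PR0: "\<forall>k. k < j \<longrightarrow> P0$k = 0 \<and> R0$k = 0" "W = x *v P0 + y *v R0"
    using mem_col[OF mw(1), of j] unfolding W_def by blast
  have h1: "W - (P0$j *s X + R0$j *s Y) \<in> Usp x y j"
    using decomp[OF PR0(1), of x y] PR0(2) X_def Y_def by simp
  obtain Q0 S0 where QS0: "\<forall>k. k < j \<longrightarrow> Q0$k = 0 \<and> S0$k = 0" "Z = x *v Q0 + y *v S0"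
    using mem_col[OF mw(2), of j] unfolding Z_def by blast
  have h2: "Z - (Q0$j *s X + S0$j *s Y) \<in> Usp x y j"
    using decomp[OF QS0(1), of x y] QS0(2) X_def Y_def by simp
  obtain P1 R1 where PR1: "\<forall>k. k < j \<longrightarrow> P1$k = 0 \<and> R1$k = 0" "X = w *v P1 + z *v R1"
    using mem_col[OF mx(1), of j] unfolding X_def by blast
  have h3: "X - (P1$j *s W + R1$j *s Z) \<in> Usp x y j"
    using decomp[OF PR1(1), of w z] PR1(2) W_def Z_def Ue by simp
  obtain Q1 S1 where QS1: "\<forall>k. k < j \<longrightarrow> Q1$k = 0 \<and> S1$k = 0" "Y = w *v Q1 + z *v S1"
    using mem_col[OF mx(2), of j] unfolding Y_def by blast
  have h4: "Y - (Q1$j *s W + S1$j *s Z) \<in> Usp x y j"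
    using decomp[OF QS1(1), of w z] QS1(2) W_def Z_def Ue by simp
  obtain a b c d where abcd: "a*d - b*c \<noteq> 0" "W - (a *s X + b *s Y) \<in> Usp x y j"
      "Z - (c *s X + d *s Y) \<in> Usp x y j"
    using key[OF Usp_0 Usp_add Usp_sc h1 h2 h3 h4] by blast
  obtain a1 b1 where ab1: "W - (a *s X + b *s Y) = x *v a1 + y *v b1"
      "\<forall>k. k \<le> j \<longrightarrow> a1$k = 0" "\<forall>k. k \<le> j \<longrightarrow> b1$k = 0"
    using abcd(2) unfolding Usp_def by blast
  obtain a2 b2 where ab2: "Z - (c *s X + d *s Y) = x *v a2 + y *v b2"
      "\<forall>k. k \<le> j \<longrightarrow> a2$k = 0" "\<forall>k. k \<le> j \<longrightarrow> b2$k = 0"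
    using abcd(3) unfolding Usp_def by blast
  define P where "P = a1 + a *s axis j 1"
  define R where "R = b1 + b *s axis j 1"
  define Q where "Q = a2 + c *s axis j 1"
  define S where "S = b2 + d *s axis j 1"
  have e1: "x *v P + y *v R = (x *v a1 + y *v b1) + (a *s X + b *s Y)"
    unfolding P_def R_def X_def Y_def by (simp add: algebra_simps vector_scalar_commute)
  have e2: "x *v Q + y *v S = (x *v a2 + y *v b2) + (c *s X + d *s Y)"
    unfolding Q_def S_def X_def Y_def by (simp add: algebra_simps vector_scalar_commute)
  have "x *v P + y *v R = W" using e1 ab1(1) by (simp add: diff_eq_eq)
  moreover have "x *v Q + y *v S = Z" using e2 ab2(1) by (simp add: diff_eq_eq)
  moreover have "\<forall>k. k < j \<longrightarrow> P$k = 0 \<and> Q$k = 0 \<and> R$k = 0 \<and> S$k = 0"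
    using ab1 ab2 by (auto simp: P_def Q_def R_def S_def axis_def)
  moreover have "P$j = a" "R$j = b" "Q$j = c" "S$j = d"
    using ab1 ab2 by (auto simp: P_def Q_def R_def S_def axis_def)
  moreover have "P$j * S$j - Q$j * R$j \<noteq> 0" using abcd(1) \<open>P$j = a\<close> \<open>R$j = b\<close> \<open>Q$j = c\<close> \<open>S$j = d\<close>
    by (simp add: mult.commute)
  ultimately show ?thesis unfolding W_def Z_def by blast
qed

lemma mult_cols: "(x::'a::field^3^3) ** (\<chi> k l. V l $ k) = (\<chi> i l. (x *v V l)$i)"
  by (simp add: vec_eq_iff matrix_matrix_mult_def matrix_vector_mult_def)

lemma backward:
  assumes eq: "right_ideal2 x y = right_ideal2 w z"
  shows "\<exists>A\<in>GL2T3. act (x, y) A = (w, z)"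
proof -
  define \<Psi> where "\<Psi> j P Q R S \<longleftrightarrow> (\<forall>k. k < j \<longrightarrow> P$k = 0 \<and> Q$k = 0 \<and> R$k = 0 \<and> S$k = 0) \<and>
     x *v P + y *v R = w *v axis j 1 \<and> x *v Q + y *v S = z *v axis j 1 \<and> P$j * S$j - Q$j * R$j \<noteq> 0"
    for j P Q R S
  have "\<forall>j. \<exists>P Q R S. \<Psi> j P Q R S" using col_lemma[OF eq] unfolding \<Psi>_def by blast
  then have "\<forall>j. \<exists>t. \<Psi> j (fst t) (fst (snd t)) (fst (snd (snd t))) (snd (snd (snd t)))"
    by (metis fst_conv snd_conv)
  from choice[OF this] obtain f where
    f: "\<forall>j. \<Psi> j (fst (f j)) (fst (snd (f j))) (fst (snd (snd (f j)))) (snd (snd (snd (f j))))" by blast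
  define P where "P j = fst (f j)" for j
  define Q where "Q j = fst (snd (f j))" for j
  define R where "R j = fst (snd (snd (f j)))" for j
  define S where "S j = snd (snd (snd (f j)))" for j
  have H: "\<Psi> j (P j) (Q j) (R j) (S j)" for j using f P_def Q_def R_def S_def by simp
  define p where "p = (\<chi> k l. P l $ k)"
  define q where "q = (\<chi> k l. Q l $ k)"
  define r where "r = (\<chi> k l. R l $ k)"
  define s where "s = (\<chi> k l. S l $ k)"
  have T: "p \<in> T3" "q \<in> T3" "r \<in> T3" "s \<in> T3"
    using H unfolding \<Psi>_def T3_def p_def q_def r_def s_def by auto
  have "x ** p + y ** r = w"
  proof -
    have "(x ** p + y ** r) $ i $ l = w $ i $ l" for i l
    proof -
      have "(x ** p + y ** r) $ i $ l = (x *v P l + y *v R l) $ i"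
        unfolding p_def r_def mult_cols by simp
      also have "\<dots> = (w *v axis l 1) $ i" using H[of l] unfolding \<Psi>_def by simp
      finally show ?thesis by (simp add: col_eq)
    qed
    then show ?thesis by (simp add: vec_eq_iff)
  qed
  moreover have "x ** q + y ** s = z"
  proof -
    have "(x ** q + y ** s) $ i $ l = z $ i $ l" for i l
    proof -
      have "(x ** q + y ** s) $ i $ l = (x *v Q l + y *v S l) $ i"
        unfolding q_def s_def mult_cols by simp
      also have "\<dots> = (z *v axis l 1) $ i" using H[of l] unfolding \<Psi>_def by simp
      finally show ?thesis by (simp add: col_eq)
    qed
    then show ?thesis by (simp add: vec_eq_iff)
  qed
  moreover have "(p,q,r,s) \<in> GL2T3"
    using inv_GL[OF T] H unfolding \<Psi>_def p_def q_def r_def s_def by simp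
  ultimately show ?thesis by force
qed

theorem mainTheorem9:
  fixes x y w z :: "'a::field ^3^3"
  assumes "x \<in> T3" "y \<in> T3" "w \<in> T3" "z \<in> T3"
    and "free_pair x y" and "free_pair w z"
  shows "(\<exists>A\<in>GL2T3. act (x, y) A = (w, z)) \<longleftrightarrow> right_ideal2 x y = right_ideal2 w z"
  using forward backward by blast

end
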